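(* Let $\Bbbk$ be a field, $H$ a Hopf $\Bbbk$-algebra with bijective antipode, $A$ a left $H$-module $\Bbbk$-algebra, and $I$ an $H$-prime ideal of $A$. Then the assignment $P \mapsto \alpha_P$ is a bijection between the set $\{ P \in \operatorname{Spec} A \mid A/P \cong \Bbbk \text{ and } P\!:\!H = I\}$ and the set of embeddings (injective morphisms) $A/I \hookrightarrow H^*$ of $H$-module algebras. Here, for such $P$, $\alpha_P\colon A\to H^*$ is given by $\alpha_P(a)(h) = $ the image of $h.a$ in $A/P=\Bbbk$, and it is regarded as the induced map on $A/I$ (its kernel is $P\!:\!H=I$).
   Context: A left $H$-module algebra is a $\Bbbk$-algebra $A$ with $1$ that is a left $H$-module via $h\otimes a\mapsto h.a$ such that $h.(ab)=(h_1.a)(h_2.b)$ and $h.1=\varepsilon(h)1$; morphisms of $H$-module algebras are algebra maps that are $H$-module maps. An $H$-ideal is a two-sided ideal which is an $H$-submodule; an $H$-ideal $I$ is $H$-prime if $A/I\ne0$ and the product of any two nonzero $H$-ideals of $A/I$ is nonzero. For an ideal $P$, $P\!:\!H=\{a\in A\mid H.a\subseteq P\}$. $H^*=\operatorname{Hom}_\Bbbk(H,\Bbbk)$ is the convolution algebra (product $(fg)(h)=f(h_1)g(h_2)$, unit $\varepsilon$), made into an $H$-module algebra by the hit action $(h \rightharpoonup f)(k) = f(kh)$ for $h,k\in H$, $f \in H^*$. For $P$ with $A/P\cong\Bbbk$, $A/P$ is identified with $\Bbbk$ via the unique algebra isomorphism. *)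

theory Defs
  imports Main "HOL.Vector_Spaces"
begin

text \<open>
  Elements of tensor powers of H are represented by finite lists of pure tensors
  (Sweedler notation); two such lists are equal as tensors iff all products of
  linear functionals take the same value on them (valid over a field).
\<close>

definition k_algebra :: "('k::field \<Rightarrow> 'r::ring_1 \<Rightarrow> 'r) \<Rightarrow> bool" where
  "k_algebra sc \<longleftrightarrow> Vector_Spaces.vector_space sc \<and>
     (\<forall>c x y. sc c (x * y) = sc c x * y \<and> sc c (x * y) = x * sc c y)"

definition lin_fun :: "('k::field \<Rightarrow> 'v::ab_group_add \<Rightarrow> 'v) \<Rightarrow> ('v \<Rightarrow> 'k) \<Rightarrow> bool" where
  "lin_fun sc f \<longleftrightarrow> Vector_Spaces.linear sc ((*)) f"

definition ev2 :: "('h \<Rightarrow> 'k::field) \<Rightarrow> ('h \<Rightarrow> 'k) \<Rightarrow> ('h \<times> 'h) list \<Rightarrow> 'k" where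
  "ev2 f g t = sum_list (map (\<lambda>(x, y). f x * g y) t)"

definition tensor_eq :: "('k::field \<Rightarrow> 'h::ab_group_add \<Rightarrow> 'h) \<Rightarrow> ('h \<times> 'h) list \<Rightarrow> ('h \<times> 'h) list \<Rightarrow> bool" where
  "tensor_eq sc t t' \<longleftrightarrow> (\<forall>f g. lin_fun sc f \<longrightarrow> lin_fun sc g \<longrightarrow> ev2 f g t = ev2 f g t')"

definition hopf_algebra ::
  "('k::field \<Rightarrow> 'h::ring_1 \<Rightarrow> 'h) \<Rightarrow> ('h \<Rightarrow> ('h \<times> 'h) list) \<Rightarrow> ('h \<Rightarrow> 'k) \<Rightarrow> ('h \<Rightarrow> 'h) \<Rightarrow> bool" where
  "hopf_algebra sc \<Delta> \<epsilon> S \<longleftrightarrow>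
     k_algebra sc \<and>
     \<comment> \<open>\<Delta> is linear\<close>
     (\<forall>x y. tensor_eq sc (\<Delta> (x + y)) (\<Delta> x @ \<Delta> y)) \<and>
     (\<forall>c x. tensor_eq sc (\<Delta> (sc c x)) (map (\<lambda>(u, v). (sc c u, v)) (\<Delta> x))) \<and>
     \<comment> \<open>coassociativity\<close>
     (\<forall>h f g l. lin_fun sc f \<longrightarrow> lin_fun sc g \<longrightarrow> lin_fun sc l \<longrightarrow>
        sum_list (map (\<lambda>(x, y). ev2 f g (\<Delta> x) * l y) (\<Delta> h)) =
        sum_list (map (\<lambda>(x, y). f x * ev2 g l (\<Delta> y)) (\<Delta> h))) \<and>
     \<comment> \<open>counit\<close>
     lin_fun sc \<epsilon> \<and>
     (\<forall>h. sum_list (map (\<lambda>(x, y). sc (\<epsilon> x) y) (\<Delta> h)) = h) \<and>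
     (\<forall>h. sum_list (map (\<lambda>(x, y). sc (\<epsilon> y) x) (\<Delta> h)) = h) \<and>
     \<comment> \<open>\<Delta> and \<epsilon> are algebra maps\<close>
     (\<forall>x y. tensor_eq sc (\<Delta> (x * y))
              (concat (map (\<lambda>(a, b). map (\<lambda>(c, d). (a * c, b * d)) (\<Delta> y)) (\<Delta> x)))) \<and>
     tensor_eq sc (\<Delta> 1) [(1, 1)] \<and>
     (\<forall>x y. \<epsilon> (x * y) = \<epsilon> x * \<epsilon> y) \<and> \<epsilon> 1 = 1 \<and>
     \<comment> \<open>antipode\<close>
     Vector_Spaces.linear sc sc S \<and>
     (\<forall>h. sum_list (map (\<lambda>(x, y). S x * y) (\<Delta> h)) = sc (\<epsilon> h) 1) \<and>
     (\<forall>h. sum_list (map (\<lambda>(x, y). x * S y) (\<Delta> h)) = sc (\<epsilon> h) 1)"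

definition module_algebra ::
  "('k::field \<Rightarrow> 'h::ring_1 \<Rightarrow> 'h) \<Rightarrow> ('h \<Rightarrow> ('h \<times> 'h) list) \<Rightarrow> ('h \<Rightarrow> 'k) \<Rightarrow>
   ('k \<Rightarrow> 'a::ring_1 \<Rightarrow> 'a) \<Rightarrow> ('h \<Rightarrow> 'a \<Rightarrow> 'a) \<Rightarrow> bool" where
  "module_algebra scH \<Delta> \<epsilon> scA act \<longleftrightarrow>
     k_algebra scA \<and>
     (\<forall>x y a. act (x + y) a = act x a + act y a) \<and>
     (\<forall>c x a. act (scH c x) a = scA c (act x a)) \<and>
     (\<forall>x a b. act x (a + b) = act x a + act x b) \<and>
     (\<forall>c x a. act x (scA c a) = scA c (act x a)) \<and>
     (\<forall>x y a. act (x * y) a = act x (act y a)) \<and>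
     (\<forall>a. act 1 a = a) \<and>
     (\<forall>h a b. act h (a * b) = sum_list (map (\<lambda>(x, y). act x a * act y b) (\<Delta> h))) \<and>
     (\<forall>h. act h 1 = scA (\<epsilon> h) 1)"

definition two_sided_ideal :: "'a::ring_1 set \<Rightarrow> bool" where
  "two_sided_ideal I \<longleftrightarrow> 0 \<in> I \<and> (\<forall>x\<in>I. \<forall>y\<in>I. x + y \<in> I) \<and> (\<forall>x\<in>I. - x \<in> I) \<and>
     (\<forall>x\<in>I. \<forall>r. r * x \<in> I \<and> x * r \<in> I)"

definition prime_ideal :: "'a::ring_1 set \<Rightarrow> bool" where
  "prime_ideal P \<longleftrightarrow> two_sided_ideal P \<and> P \<noteq> UNIV \<and>
     (\<forall>J K. two_sided_ideal J \<longrightarrow> two_sided_ideal K \<longrightarrow>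
        (\<forall>x\<in>J. \<forall>y\<in>K. x * y \<in> P) \<longrightarrow> J \<subseteq> P \<or> K \<subseteq> P)"

definition H_ideal :: "('h \<Rightarrow> 'a \<Rightarrow> 'a) \<Rightarrow> 'a::ring_1 set \<Rightarrow> bool" where
  "H_ideal act I \<longleftrightarrow> two_sided_ideal I \<and> (\<forall>h. \<forall>a\<in>I. act h a \<in> I)"

text \<open>H-ideals of A/I correspond to H-ideals of A containing I; the product of the
  images of J, K in A/I is zero iff all products x*y (x in J, y in K) lie in I.\<close>
definition H_prime :: "('h \<Rightarrow> 'a \<Rightarrow> 'a) \<Rightarrow> 'a::ring_1 set \<Rightarrow> bool" where
  "H_prime act I \<longleftrightarrow> H_ideal act I \<and> I \<noteq> UNIV \<and>
     (\<forall>J K. H_ideal act J \<longrightarrow> H_ideal act K \<longrightarrow> I \<subseteq> J \<longrightarrow> I \<subseteq> K \<longrightarrow>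
        (\<forall>x\<in>J. \<forall>y\<in>K. x * y \<in> I) \<longrightarrow> J = I \<or> K = I)"

definition colon_H :: "('h \<Rightarrow> 'a \<Rightarrow> 'a) \<Rightarrow> 'a set \<Rightarrow> 'a set" where
  "colon_H act P = {a. \<forall>h. act h a \<in> P}"

text \<open>A/P \<cong> k as k-algebras: there is a k-algebra map A \<rightarrow> k with kernel P.\<close>
definition quotient_is_k :: "('k::field \<Rightarrow> 'a::ring_1 \<Rightarrow> 'a) \<Rightarrow> 'a set \<Rightarrow> bool" where
  "quotient_is_k scA P \<longleftrightarrow> (\<exists>\<chi>. lin_fun scA \<chi> \<and> (\<forall>a b. \<chi> (a * b) = \<chi> a * \<chi> b) \<and>
      \<chi> 1 = 1 \<and> {a. \<chi> a = 0} = P)"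

text \<open>The image of a in A/P = k under the unique algebra isomorphism: the scalar c
  with a - c 1 \<in> P.\<close>
definition quot_val :: "('k::field \<Rightarrow> 'a::ring_1 \<Rightarrow> 'a) \<Rightarrow> 'a set \<Rightarrow> 'a \<Rightarrow> 'k" where
  "quot_val scA P a = (THE c. a - scA c 1 \<in> P)"

definition alpha :: "('k::field \<Rightarrow> 'a::ring_1 \<Rightarrow> 'a) \<Rightarrow> ('h \<Rightarrow> 'a \<Rightarrow> 'a) \<Rightarrow> 'a set \<Rightarrow> 'a \<Rightarrow> ('h \<Rightarrow> 'k)" where
  "alpha scA act P a = (\<lambda>h. quot_val scA P (act h a))"

text \<open>H^*: linear functionals on H, with convolution product, unit \<epsilon>, hit action.\<close>
definition convol :: "('h \<Rightarrow> ('h \<times> 'h) list) \<Rightarrow> ('h \<Rightarrow> 'k::field) \<Rightarrow> ('h \<Rightarrow> 'k) \<Rightarrow> 'h \<Rightarrow> 'k" where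
  "convol \<Delta> f g = (\<lambda>h. ev2 f g (\<Delta> h))"

definition hit :: "'h::times \<Rightarrow> ('h \<Rightarrow> 'k) \<Rightarrow> 'h \<Rightarrow> 'k" where
  "hit h f = (\<lambda>k. f (k * h))"

text \<open>Injective H-module algebra maps A/I \<rightarrow> H^*, represented as H-module algebra maps
  \<phi> : A \<rightarrow> H^* whose kernel is exactly I (kernel \<supseteq> I: well defined on A/I;
  kernel \<subseteq> I: injective on A/I).\<close>
definition embeddings ::
  "('k::field \<Rightarrow> 'h::ring_1 \<Rightarrow> 'h) \<Rightarrow> ('h \<Rightarrow> ('h \<times> 'h) list) \<Rightarrow> ('h \<Rightarrow> 'k) \<Rightarrow>
   ('k \<Rightarrow> 'a::ring_1 \<Rightarrow> 'a) \<Rightarrow> ('h \<Rightarrow> 'a \<Rightarrow> 'a) \<Rightarrow> 'a set \<Rightarrow> ('a \<Rightarrow> 'h \<Rightarrow> 'k) set" where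
  "embeddings scH \<Delta> \<epsilon> scA act I = {\<phi>.
     (\<forall>a. lin_fun scH (\<phi> a)) \<and>
     (\<forall>a b. \<phi> (a + b) = (\<lambda>h. \<phi> a h + \<phi> b h)) \<and>
     (\<forall>c a. \<phi> (scA c a) = (\<lambda>h. c * \<phi> a h)) \<and>
     (\<forall>a b. \<phi> (a * b) = convol \<Delta> (\<phi> a) (\<phi> b)) \<and>
     \<phi> 1 = \<epsilon> \<and>
     (\<forall>h a. \<phi> (act h a) = hit h (\<phi> a)) \<and>
     {a. \<phi> a = (\<lambda>_. 0)} = I}"

end

theory Submission
  imports Defs
begin

lemma vs_self: "Vector_Spaces.vector_space ((*) :: 'k::field \<Rightarrow> 'k \<Rightarrow> 'k)"
  unfolding vector_space_def by (auto simp: algebra_simps)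

lemma add_hom_basics:
  fixes \<chi> :: "'a::ab_group_add \<Rightarrow> 'b::ab_group_add"
  assumes "\<And>x y. \<chi> (x + y) = \<chi> x + \<chi> y"
  shows "\<chi> 0 = 0" "\<chi> (- x) = - \<chi> x" "\<chi> (x - y) = \<chi> x - \<chi> y"
proof -
  have "\<chi> (0 + 0) = \<chi> 0 + \<chi> 0" by (rule assms)
  then show z: "\<chi> 0 = 0" by simp
  have "\<chi> (x + - x) = \<chi> x + \<chi> (- x)" by (rule assms)
  then show n: "\<chi> (- x) = - \<chi> x" using z by (simp add: add_eq_0_iff)
  have "\<chi> (x + - y) = \<chi> x + \<chi> (- y)" by (rule assms)
  moreover have "\<chi> (- y) = - \<chi> y"
  proof -
    have "\<chi> (y + - y) = \<chi> y + \<chi> (- y)" by (rule assms)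
    then show ?thesis using z by (simp add: add_eq_0_iff)
  qed
  ultimately show "\<chi> (x - y) = \<chi> x - \<chi> y" by simp
qed

lemma add_hom_sum_list:
  fixes \<chi> :: "'a::ab_group_add \<Rightarrow> 'b::ab_group_add"
  assumes "\<And>x y. \<chi> (x + y) = \<chi> x + \<chi> y"
  shows "\<chi> (sum_list (map f xs)) = sum_list (map (\<lambda>x. \<chi> (f x)) xs)"
  by (induction xs) (auto simp: assms add_hom_basics[OF assms])

lemma quot_val_eq:
  fixes scA :: "'k::field \<Rightarrow> 'a::ring_1 \<Rightarrow> 'a"
  assumes "lin_fun scA \<chi>" "\<chi> 1 = 1" "P = {a. \<chi> a = 0}"
  shows "quot_val scA P a = \<chi> a"
proof -
  have add: "\<And>x y. \<chi> (x + y) = \<chi> x + \<chi> y" and sc: "\<And>c x. \<chi> (scA c x) = c * \<chi> x"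
    using assms(1) unfolding lin_fun_def linear_iff by auto
  have key: "a - scA c 1 \<in> P \<longleftrightarrow> c = \<chi> a" for c
    using assms(2,3) by (auto simp: add_hom_basics[OF add] sc)
  show ?thesis unfolding quot_val_def
    by (rule the_equality) (use key in auto)
qed

lemma ker_prime:
  fixes \<chi> :: "'a::ring_1 \<Rightarrow> 'k::field"
  assumes add: "\<And>x y. \<chi> (x + y) = \<chi> x + \<chi> y" and mul: "\<And>x y. \<chi> (x * y) = \<chi> x * \<chi> y"
    and one: "\<chi> 1 = 1"
  shows "prime_ideal {a. \<chi> a = 0}"
proof -
  have "two_sided_ideal {a. \<chi> a = 0}"
    unfolding two_sided_ideal_def by (auto simp: add add_hom_basics[OF add] mul)
  moreover have "{a. \<chi> a = 0} \<noteq> UNIV" using one by (metis (mono_tags) UNIV_I mem_Collect_eq zero_neq_one)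
  moreover have "J \<subseteq> {a. \<chi> a = 0} \<or> K \<subseteq> {a. \<chi> a = 0}"
    if "\<forall>x\<in>J. \<forall>y\<in>K. x * y \<in> {a. \<chi> a = 0}" for J K
    using that by (auto simp: mul)
  ultimately show ?thesis unfolding prime_ideal_def by blast
qed

theorem proposition3p2:
  fixes scH :: "'k::field \<Rightarrow> 'h::ring_1 \<Rightarrow> 'h"
    and \<Delta> :: "'h \<Rightarrow> ('h \<times> 'h) list" and \<epsilon> :: "'h \<Rightarrow> 'k" and S :: "'h \<Rightarrow> 'h"
    and scA :: "'k \<Rightarrow> 'a::ring_1 \<Rightarrow> 'a" and act :: "'h \<Rightarrow> 'a \<Rightarrow> 'a"
    and I :: "'a set"
  assumes "hopf_algebra scH \<Delta> \<epsilon> S"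
    and "bij S"
    and "module_algebra scH \<Delta> \<epsilon> scA act"
    and "H_prime act I"
  shows "bij_betw (alpha scA act)
           {P. prime_ideal P \<and> quotient_is_k scA P \<and> colon_H act P = I}
           (embeddings scH \<Delta> \<epsilon> scA act I)"
proof -
  have vsH: "Vector_Spaces.vector_space scH" and vsA: "Vector_Spaces.vector_space scA"
    using assms(1,3) unfolding hopf_algebra_def module_algebra_def k_algebra_def by auto
  have D1: "tensor_eq scH (\<Delta> 1) [(1, 1)]" using assms(1) unfolding hopf_algebra_def by auto
  have MA: "\<And>x y a. act (x + y) a = act x a + act y a"
     "\<And>c x a. act (scH c x) a = scA c (act x a)"
     "\<And>x y a. act (x * y) a = act x (act y a)"
     "\<And>a. act 1 a = a"
     "\<And>h a b. act h (a * b) = sum_list (map (\<lambda>(x, y). act x a * act y b) (\<Delta> h))"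
     "\<And>h. act h 1 = scA (\<epsilon> h) 1"
    using assms(3) unfolding module_algebra_def by auto
  let ?D = "{P. prime_ideal P \<and> quotient_is_k scA P \<and> colon_H act P = I}"
  let ?E = "embeddings scH \<Delta> \<epsilon> scA act I"
  have chi: "\<exists>\<chi>. (\<forall>x y. \<chi> (x + y) = \<chi> x + \<chi> y) \<and> (\<forall>c x. \<chi> (scA c x) = c * \<chi> x) \<and>
      (\<forall>a b. \<chi> (a * b) = \<chi> a * \<chi> b) \<and> \<chi> 1 = 1 \<and> P = {a. \<chi> a = 0} \<and>
      (\<forall>a. quot_val scA P a = \<chi> a)" if "P \<in> ?D" for P
  proof -
    from that obtain \<chi> where c: "lin_fun scA \<chi>" "\<forall>a b. \<chi> (a * b) = \<chi> a * \<chi> b" "\<chi> 1 = 1"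
      "{a. \<chi> a = 0} = P" unfolding quotient_is_k_def by auto
    show ?thesis
      apply (rule exI[of _ \<chi>])
      using c quot_val_eq[OF c(1) c(3) c(4)[symmetric]] unfolding lin_fun_def linear_iff by auto
  qed
  have inj: "inj_on (alpha scA act) ?D"
  proof (rule inj_onI)
    fix P Q assume P: "P \<in> ?D" and Q: "Q \<in> ?D" and eq: "alpha scA act P = alpha scA act Q"
    obtain \<chi> where cP: "P = {a. \<chi> a = 0}" "\<forall>a. quot_val scA P a = \<chi> a" using chi[OF P] by blast
    obtain \<psi> where cQ: "Q = {a. \<psi> a = 0}" "\<forall>a. quot_val scA Q a = \<psi> a" using chi[OF Q] by blast
    have "\<chi> a = \<psi> a" for a
      using fun_cong[OF fun_cong[OF eq, of a], of 1] cP cQ by (simp add: alpha_def MA)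
    then show "P = Q" using cP cQ by auto
  qed
  have into: "alpha scA act P \<in> ?E" if PD: "P \<in> ?D" for P
  proof -
    obtain \<chi> where c: "\<forall>x y. \<chi> (x + y) = \<chi> x + \<chi> y" "\<forall>c x. \<chi> (scA c x) = c * \<chi> x"
      "\<forall>a b. \<chi> (a * b) = \<chi> a * \<chi> b" "\<chi> 1 = 1" "P = {a. \<chi> a = 0}"
      "\<forall>a. quot_val scA P a = \<chi> a" using chi[OF PD] by blast
    have al: "alpha scA act P a = (\<lambda>h. \<chi> (act h a))" for a
      using c(6) by (simp add: alpha_def)
    have add: "\<And>x y. \<chi> (x + y) = \<chi> x + \<chi> y" using c(1) by blast
    have col: "colon_H act P = I" using PD by auto
    show ?thesis unfolding embeddings_def
    proof (intro CollectI conjI allI)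
      fix a show "lin_fun scH (alpha scA act P a)"
        unfolding lin_fun_def linear_iff al using vsH vs_self c(1,2) MA(1,2) by auto
    next
      fix a b show "alpha scA act P (a + b) = (\<lambda>h. alpha scA act P a h + alpha scA act P b h)"
        unfolding al using c(1) assms(3) unfolding module_algebra_def by auto
    next
      fix cc a show "alpha scA act P (scA cc a) = (\<lambda>h. cc * alpha scA act P a h)"
        unfolding al using c(2) assms(3) unfolding module_algebra_def by auto
    next
      fix a b show "alpha scA act P (a * b) = convol \<Delta> (alpha scA act P a) (alpha scA act P b)"
        unfolding al convol_def ev2_def MA(5) add_hom_sum_list[OF add]
        by (intro ext arg_cong[where f=sum_list] map_cong) (auto simp: c(3))
    next
      show "alpha scA act P 1 = \<epsilon>"
        unfolding al MA(6) using c(2,4) by auto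
    next
      fix h a show "alpha scA act P (act h a) = hit h (alpha scA act P a)"
        unfolding al hit_def MA(3)[symmetric] ..
    next
      show "{a. alpha scA act P a = (\<lambda>_. 0)} = I"
      proof -
        have "alpha scA act P a = (\<lambda>_. 0) \<longleftrightarrow> a \<in> colon_H act P" for a
          unfolding al colon_H_def using c(5) by (auto simp: fun_eq_iff)
        then show ?thesis using col by auto
      qed
    qed
  qed
  have onto: "\<phi> \<in> alpha scA act ` ?D" if E: "\<phi> \<in> ?E" for \<phi>
  proof -
    have e: "\<forall>a. lin_fun scH (\<phi> a)" "\<forall>a b. \<phi> (a + b) = (\<lambda>h. \<phi> a h + \<phi> b h)"
      "\<forall>c a. \<phi> (scA c a) = (\<lambda>h. c * \<phi> a h)"
      "\<forall>a b. \<phi> (a * b) = convol \<Delta> (\<phi> a) (\<phi> b)" "\<phi> 1 = \<epsilon>"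
      "\<forall>h a. \<phi> (act h a) = hit h (\<phi> a)" "{a. \<phi> a = (\<lambda>_. 0)} = I"
      using E unfolding embeddings_def by auto
    define \<chi> where "\<chi> a = \<phi> a 1" for a
    define P where "P = {a. \<chi> a = 0}"
    have e1: "\<epsilon> 1 = 1" using assms(1) unfolding hopf_algebra_def by auto
    have add: "\<And>x y. \<chi> (x + y) = \<chi> x + \<chi> y" using e(2) by (simp add: \<chi>_def)
    have sc: "\<And>c x. \<chi> (scA c x) = c * \<chi> x" using e(3) by (simp add: \<chi>_def)
    have mul: "\<chi> (a * b) = \<chi> a * \<chi> b" for a b
    proof -
      have "ev2 (\<phi> a) (\<phi> b) (\<Delta> 1) = ev2 (\<phi> a) (\<phi> b) [(1, 1)]"
        using D1 e(1) unfolding tensor_eq_def by blast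
      then show ?thesis using e(4) by (simp add: \<chi>_def convol_def ev2_def)
    qed
    have one: "\<chi> 1 = 1" using e(5) e1 by (simp add: \<chi>_def)
    have lin: "lin_fun scA \<chi>" unfolding lin_fun_def linear_iff using vsA vs_self add sc by auto
    have qv: "quot_val scA P a = \<chi> a" for a using quot_val_eq[OF lin one P_def] .
    have PD: "P \<in> ?D"
    proof (intro CollectI conjI)
      show "prime_ideal P" unfolding P_def by (rule ker_prime[OF add mul one])
      show "quotient_is_k scA P" unfolding quotient_is_k_def P_def
        using lin mul one by blast
      show "colon_H act P = I"
        unfolding e(7)[symmetric] colon_H_def P_def \<chi>_def using e(6)
        by (auto simp: hit_def fun_eq_iff)
    qed
    have "alpha scA act P = \<phi>"
      using e(6) by (auto simp: alpha_def qv \<chi>_def hit_def fun_eq_iff)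
    then show ?thesis using PD by blast
  qed
  show ?thesis unfolding bij_betw_def using inj into onto by blast
qed

end
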